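(* Let $l\ge-\tfrac12$. The functions $U_0:=Y_{l,x}Y_{l,t}[p_0]$ and $U_{4n-1}:=Y_{l,x}Y_{l,t}[p_{4n-1}]$, $n=1,2,\dots$, satisfy $$\left(\frac{\partial^2}{\partial x^2}-\frac{\partial^2}{\partial t^2}-\frac{l(l+1)}{x^2}+\frac{l(l+1)}{t^2}\right)U(x,t)=0,\qquad x,t>0,$$ together with $U(0,t)=0$ and $U(x,0)=0$. Moreover $U_0(x,t)=C_0^2x^{l+1}t^{l+1}$ and $$U_{4n-1}(x,t)=\sum_{\text{even }k=0}^{2n}\binom{2n}{k}\frac{\Gamma\left(n+\frac{1-k}{2}\right)\Gamma\left(\frac{k+1}{2}\right)\Gamma^2(l+1)}{2^{2l+3}\Gamma^2\left(l+\frac32\right)\Gamma\left(n+l+\frac{3-k}{2}\right)\Gamma\left(l+\frac{k+3}{2}\right)}\,x^{2n-k+l+1}t^{k+l+1}.$$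
   Context: For $l\ge-\tfrac12$, $Y_{l,x}f(x)=\frac{x^{-l}}{2^{l+\frac12}\Gamma(l+\frac32)}\int_0^x (x^2-s^2)^l f(s)\,ds$, and $Y_{l,t}$ is the same operator acting in the variable $t$. $C_0=\frac{\Gamma(\frac12)\Gamma(l+1)}{2^{l+\frac32}\Gamma(l+\frac32)^2}$. The wave polynomials used are $p_0(x,t)=1$ and $p_{4n-1}(x,t)=\sum_{\text{even }k=0}^{2n}\binom{2n}{k}x^{2n-k}t^k$, $n\ge1$. *)

theory Defs
  imports "HOL-Analysis.Analysis"
begin

definition Yop :: "real \<Rightarrow> (real \<Rightarrow> real) \<Rightarrow> real \<Rightarrow> real" where
  "Yop l f x = x powr (-l) / (2 powr (l + 1/2) * Gamma (l + 3/2))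
       * integral {0..x} (\<lambda>s. (x\<^sup>2 - s\<^sup>2) powr l * f s)"

definition YY :: "real \<Rightarrow> (real \<Rightarrow> real \<Rightarrow> real) \<Rightarrow> real \<Rightarrow> real \<Rightarrow> real" where
  "YY l p x t = Yop l (\<lambda>s. Yop l (\<lambda>\<tau>. p s \<tau>) t) x"

definition C0 :: "real \<Rightarrow> real" where
  "C0 l = Gamma (1/2) * Gamma (l + 1) / (2 powr (l + 3/2) * (Gamma (l + 3/2))\<^sup>2)"

text \<open>Wave polynomial p_{4n-1}(x,t) = sum over even k in 0..2n of binom(2n,k) x^(2n-k) t^k.\<close>
definition wave_poly :: "nat \<Rightarrow> real \<Rightarrow> real \<Rightarrow> real" where
  "wave_poly n x t = (\<Sum>k\<in>{k. k \<le> 2*n \<and> even k}. real ((2*n) choose k) * x^(2*n-k) * t^k)"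

definition solves_pde :: "real \<Rightarrow> (real \<Rightarrow> real \<Rightarrow> real) \<Rightarrow> real \<Rightarrow> real \<Rightarrow> bool" where
  "solves_pde l U x t \<longleftrightarrow>
     (\<exists>Uxx Utt.
        (\<forall>y>0. (\<lambda>z. U z t) differentiable (at y)) \<and>
        (\<forall>y>0. (\<lambda>z. U x z) differentiable (at y)) \<and>
        ((\<lambda>y. deriv (\<lambda>z. U z t) y) has_real_derivative Uxx) (at x) \<and>
        ((\<lambda>y. deriv (\<lambda>z. U x z) y) has_real_derivative Utt) (at t) \<and>
        Uxx - Utt - l * (l + 1) / x\<^sup>2 * U x t + l * (l + 1) / t\<^sup>2 * U x t = 0)"

end

theory Submission imports Defs "HOL-Analysis.Analysis" begin


lemma int01:
  fixes l :: real and m :: nat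
  assumes l: "l > -1"
  shows "((\<lambda>s. (1 - s\<^sup>2) powr l * s^m) has_integral Beta ((real m + 1)/2) (l+1) / 2) {0..1}"
proof -
  define f where "f = (\<lambda>u::real. u powr ((real m + 1)/2 - 1) * (1 - u) powr (l + 1 - 1))"
  have a: "(real m + 1)/2 > 0" by simp
  have b: "l + 1 > 0" using l by simp
  have si: "set_integrable lborel {(\<lambda>x::real. x^2) 0..(\<lambda>x. x^2) 1} f"
    using integrable_Beta[OF a b] unfolding f_def by simp
  note sub = integral_substitution[where g="\<lambda>x. x^2" and g'="\<lambda>x. 2*x" and a=0 and b=1, OF si]
  have d: "\<And>x. x \<in> {0..1} \<Longrightarrow> ((\<lambda>x::real. x^2) has_real_derivative 2*x) (at x)"
    by (auto intro!: derivative_eq_intros)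
  have c: "continuous_on {0..1} (\<lambda>x::real. 2*x)" by (intro continuous_intros)
  have s1: "set_integrable lborel {0..1} (\<lambda>x. f (x^2) * (2*x))"
    using sub(1)[OF d c] by auto
  have s2: "(LBINT x. f x * indicator {0..1} x) = (LBINT x. f (x^2) * (2*x) * indicator {0..1} x)"
    using sub(2)[OF d c] by auto
  have hB: "(f has_integral Beta ((real m + 1)/2) (l+1)) {0..1}"
    unfolding f_def using has_integral_Beta_real[OF a b] by simp
  have e1: "(LINT x:{0..1}|lborel. f x) = Beta ((real m + 1)/2) (l+1)"
    using set_borel_integral_eq_integral(2)[OF integrable_Beta[OF a b]] hB
    unfolding f_def by (simp add: integral_unique)
  have e2: "(LINT x:{0..1}|lborel. f (x^2) * (2*x)) = integral {0..1} (\<lambda>x. f (x^2) * (2*x))"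
    by (rule set_borel_integral_eq_integral(2)[OF s1])
  have "(LINT x:{0..1}|lborel. f x) = (LINT x:{0..1}|lborel. f (x^2) * (2*x))"
    using s2 unfolding set_lebesgue_integral_def by (simp add: mult.commute)
  hence I: "integral {0..1} (\<lambda>x. f (x^2) * (2*x)) = Beta ((real m + 1)/2) (l+1)"
    using e1 e2 by simp
  have H: "((\<lambda>x. f (x^2) * (2*x)) has_integral Beta ((real m + 1)/2) (l+1)) {0..1}"
    using set_borel_integral_eq_integral(1)[OF s1] I by (metis has_integral_integral)
  have H2: "((\<lambda>x. (f (x^2) * (2*x)) / 2) has_integral Beta ((real m + 1)/2) (l+1) / 2) {0..1}"
    using has_integral_divide[OF H, of 2] by simp
  show ?thesis
  proof (rule has_integral_spike[OF negligible_sing[of 0] _ H2])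
    fix s :: real assume "s \<in> {0..1} - {0}"
    hence s: "s > 0" by auto
    have q: "s^2 = s powr 2" using s by (simp add: powr_numeral)
    have "(s^2) powr ((real m + 1)/2 - 1) = s powr (2 * ((real m + 1)/2 - 1))"
      unfolding q by (simp add: powr_powr)
    also have "2 * ((real m + 1)/2 - 1) = real m - 1" by (simp add: field_simps)
    also have "s powr (real m - 1) * s = s ^ m"
      using s by (simp add: powr_diff powr_realpow)
    finally have "(s^2) powr ((real m + 1)/2 - 1) * s = s^m" .
    thus "(1 - s\<^sup>2) powr l * s^m = f (s^2) * (2 * s) / 2"
      unfolding f_def by (simp add: algebra_simps)
  qed
qed

lemma int_scaled:
  fixes l x :: real and m :: nat
  assumes l: "l > -1" and x: "x > 0"
  shows "((\<lambda>s. (x\<^sup>2 - s\<^sup>2) powr l * s^m) has_integral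
           x powr (2*l + real m + 1) * (Beta ((real m + 1)/2) (l+1) / 2)) {0..x}"
proof -
  define B where "B = Beta ((real m + 1)/2) (l+1) / 2"
  have h0: "((\<lambda>s. (1 - s\<^sup>2) powr l * s^m) has_integral B) {0..1}"
    unfolding B_def by (rule int01[OF l])
  have "(1/x) \<noteq> 0" using x by simp
  from has_integral_stretch_real[OF h0 this]
  have h1: "((\<lambda>s. (1 - (1/x * s)\<^sup>2) powr l * (1/x * s)^m) has_integral x * B)
             ((\<lambda>y. y / (1/x)) ` {0..1})" using x by (simp add: mult.commute)
  have img: "(\<lambda>y. y / (1/x)) ` {0..1} = {0..x}"
  proof
    show "(\<lambda>y. y / (1/x)) ` {0..1} \<subseteq> {0..x}" using x by (auto simp: mult_le_cancel_left1)
    show "{0..x} \<subseteq> (\<lambda>y. y / (1/x)) ` {0..1}"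
    proof
      fix s assume "s \<in> {0..x}"
      hence "s / x \<in> {0..1}" "s = (s/x) / (1/x)" using x by auto
      thus "s \<in> (\<lambda>y. y / (1/x)) ` {0..1}" by blast
    qed
  qed
  have h2: "((\<lambda>s. x powr (2*l) * x^m * ((1 - (1/x * s)\<^sup>2) powr l * (1/x * s)^m)) has_integral
             x powr (2*l) * x^m * (x * B)) {0..x}"
    by (rule has_integral_mult_right[OF h1[unfolded img]])
  have e0: "x powr (2*l + real m + 1) = x powr (2*l) * x powr (real m) * x powr 1"
    by (simp only: powr_add)
  have e: "x powr (2*l) * x^m * (x * B) = x powr (2*l + real m + 1) * B"
    unfolding e0 using x by (simp add: powr_realpow)
  show ?thesis unfolding B_def[symmetric] e[symmetric]
  proof (rule has_integral_cong[THEN iffD1, OF _ h2])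
    fix s assume s: "s \<in> {0..x}"
    have a: "x\<^sup>2 - s\<^sup>2 = x\<^sup>2 * (1 - (1/x * s)\<^sup>2)" using x by (simp add: field_simps)
    have b0: "0 \<le> 1/x * s" "1/x * s \<le> 1" using s x by (auto simp: field_simps)
    have b: "1 - (1/x * s)\<^sup>2 \<ge> 0" using b0 power_le_one[OF b0, of 2] by simp
    have c0: "x\<^sup>2 = x powr 2" using x by (simp add: powr_numeral)
    have c: "(x\<^sup>2) powr l = x powr (2*l)" unfolding c0 by (simp add: powr_powr mult.commute)
    have d0: "x * (1/x * s) = s" using x by simp
    have d: "s^m = x^m * (1/x * s)^m" unfolding power_mult_distrib[symmetric] d0 ..
    show "x powr (2*l) * x^m * ((1 - (1/x * s)\<^sup>2) powr l * (1/x * s)^m) = (x\<^sup>2 - s\<^sup>2) powr l * s^m"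
      unfolding a using b x by (simp add: powr_mult c d)
  qed
qed

definition Kc :: "real \<Rightarrow> nat \<Rightarrow> real" where
  "Kc l m = Beta ((real m + 1)/2) (l+1) / (2 * (2 powr (l + 1/2) * Gamma (l + 3/2)))"

lemma Yop_sum:
  fixes l x :: real and S :: "nat set" and a :: "nat \<Rightarrow> real" and mm :: "nat \<Rightarrow> nat"
  assumes l: "l > -1" and x: "x > 0" and S: "finite S"
  shows "Yop l (\<lambda>s. \<Sum>k\<in>S. a k * s^(mm k)) x = (\<Sum>k\<in>S. a k * Kc l (mm k) * x powr (l + real (mm k) + 1))"
proof -
  define B where "B = (\<lambda>k. x powr (2*l + real (mm k) + 1) * (Beta ((real (mm k) + 1)/2) (l+1) / 2))"
  have hk: "((\<lambda>s. (x\<^sup>2 - s\<^sup>2) powr l * (a k * s^(mm k))) has_integral a k * B k) {0..x}" for k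
  proof -
    have "((\<lambda>s. a k * ((x\<^sup>2 - s\<^sup>2) powr l * s^(mm k))) has_integral a k * B k) {0..x}"
      unfolding B_def by (rule has_integral_mult_right[OF int_scaled[OF l x]])
    thus ?thesis by (simp add: mult_ac)
  qed
  have hs: "((\<lambda>s. \<Sum>k\<in>S. (x\<^sup>2 - s\<^sup>2) powr l * (a k * s^(mm k))) has_integral (\<Sum>k\<in>S. a k * B k)) {0..x}"
    by (rule has_integral_sum[OF S hk])
  have I: "integral {0..x} (\<lambda>s. (x\<^sup>2 - s\<^sup>2) powr l * (\<Sum>k\<in>S. a k * s^(mm k))) = (\<Sum>k\<in>S. a k * B k)"
    using hs by (simp add: sum_distrib_left integral_unique)
  define D where "D = 2 powr (l + 1/2) * Gamma (l + 3/2)"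
  have "Yop l (\<lambda>s. \<Sum>k\<in>S. a k * s^(mm k)) x = x powr (-l) / D * (\<Sum>k\<in>S. a k * B k)"
    unfolding Yop_def I D_def ..
  also have "\<dots> = (\<Sum>k\<in>S. x powr (-l) / D * (a k * B k))" by (simp add: sum_distrib_left)
  also have "\<dots> = (\<Sum>k\<in>S. a k * Kc l (mm k) * x powr (l + real (mm k) + 1))"
  proof (rule sum.cong[OF refl])
    fix k
    have p: "x powr (-l) * x powr (2*l + real (mm k) + 1) = x powr (l + real (mm k) + 1)"
      by (simp add: powr_add[symmetric] add_ac)
    show "x powr (-l) / D * (a k * B k) = a k * Kc l (mm k) * x powr (l + real (mm k) + 1)"
      unfolding B_def Kc_def D_def p[symmetric] by (simp add: field_simps)
  qed
  finally show ?thesis .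
qed



lemma pde_generic:
  fixes U :: "real \<Rightarrow> real \<Rightarrow> real" and S :: "nat set" and d al be :: "nat \<Rightarrow> real"
  assumes x: "x > 0" and t: "t > 0" and S: "finite S"
    and Ueq: "\<And>z w. z > 0 \<Longrightarrow> w > 0 \<Longrightarrow> U z w = (\<Sum>k\<in>S. d k * z powr al k * w powr be k)"
    and alg: "(\<Sum>k\<in>S. d k * (al k * (al k - 1)) * x powr (al k - 2) * t powr be k)
            - (\<Sum>k\<in>S. d k * (be k * (be k - 1)) * x powr al k * t powr (be k - 2))
            - l * (l + 1) / x\<^sup>2 * U x t + l * (l + 1) / t\<^sup>2 * U x t = 0"
  shows "solves_pde l U x t"
proof -
  define D1 where "D1 = (\<lambda>y. \<Sum>k\<in>S. d k * (al k * y powr (al k - 1)) * t powr be k)"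
  define D2 where "D2 = (\<lambda>y. \<Sum>k\<in>S. d k * x powr al k * (be k * y powr (be k - 1)))"
  have dx: "((\<lambda>z. \<Sum>k\<in>S. d k * z powr al k * t powr be k) has_real_derivative D1 y) (at y)" if "y > 0" for y
    unfolding D1_def using that by (auto intro!: derivative_eq_intros sum.cong simp: algebra_simps)
  have dt: "((\<lambda>z. \<Sum>k\<in>S. d k * x powr al k * z powr be k) has_real_derivative D2 y) (at y)" if "y > 0" for y
    unfolding D2_def using that by (auto intro!: derivative_eq_intros sum.cong simp: algebra_simps)
  have dxx: "(D1 has_real_derivative (\<Sum>k\<in>S. d k * (al k * (al k - 1)) * x powr (al k - 2) * t powr be k)) (at x)"
    unfolding D1_def using x by (auto intro!: derivative_eq_intros sum.cong simp: algebra_simps)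
  have dtt: "(D2 has_real_derivative (\<Sum>k\<in>S. d k * (be k * (be k - 1)) * x powr al k * t powr (be k - 2))) (at t)"
    unfolding D2_def using t by (auto intro!: derivative_eq_intros sum.cong simp: algebra_simps)
  have Ux: "((\<lambda>z. U z t) has_real_derivative D1 y) (at y)" if "y > 0" for y
    by (rule has_field_derivative_transform_within_open[OF dx[OF that], of "{0<..}"])
       (use that t Ueq in auto)
  have Ut: "((\<lambda>z. U x z) has_real_derivative D2 y) (at y)" if "y > 0" for y
    by (rule has_field_derivative_transform_within_open[OF dt[OF that], of "{0<..}"])
       (use that x Ueq in auto)
  have Ux': "((\<lambda>y. deriv (\<lambda>z. U z t) y) has_real_derivative
     (\<Sum>k\<in>S. d k * (al k * (al k - 1)) * x powr (al k - 2) * t powr be k)) (at x)"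
    by (rule has_field_derivative_transform_within_open[OF dxx, of "{0<..}"])
       (use x Ux DERIV_imp_deriv in \<open>auto simp: DERIV_imp_deriv[OF Ux]\<close>)
  have Ut': "((\<lambda>y. deriv (\<lambda>z. U x z) y) has_real_derivative
     (\<Sum>k\<in>S. d k * (be k * (be k - 1)) * x powr al k * t powr (be k - 2))) (at t)"
    by (rule has_field_derivative_transform_within_open[OF dtt, of "{0<..}"])
       (use t Ut in \<open>auto simp: DERIV_imp_deriv[OF Ut]\<close>)
  show ?thesis unfolding solves_pde_def
    using Ux Ut Ux' Ut' alg by (auto simp: real_differentiable_def)
qed



lemma Gamma_plus1_pos: "(z::real) > 0 \<Longrightarrow> Gamma (z + 1) = z * Gamma z"
  by (rule Gamma_plus1) (auto dest: nonpos_Ints_nonpos)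

lemma Kc_rec:
  assumes l: "l > -1"
  shows "Kc l (m + 2) * (real m + 2*l + 3) = Kc l m * (real m + 1)"
proof -
  define p where "p = (real m + 1)/2"
  define q where "q = l + 1"
  have p: "p > 0" unfolding p_def by simp
  have q: "q > 0" unfolding q_def using l by simp
  have np: "p \<notin> \<int>\<^sub>\<le>\<^sub>0" "q \<notin> \<int>\<^sub>\<le>\<^sub>0" using p q by (auto dest: nonpos_Ints_nonpos)
  have B: "(p + q) * Beta (p + 1) q = p * Beta p q"
    by (rule Beta_plus1_left) (use np in auto)
  have e1: "(real (m+2) + 1)/2 = p + 1" unfolding p_def by simp
  have e2: "real m + 2*l + 3 = 2 * (p + q)" unfolding p_def q_def by simp
  have e3: "real m + 1 = 2 * p" unfolding p_def by simp
  define D where "D = 2 * (2 powr (l + 1/2) * Gamma (l + 3/2))"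
  have Km: "Kc l m = Beta p q / D" unfolding Kc_def p_def q_def D_def ..
  have Km2: "Kc l (m+2) = Beta (p+1) q / D" unfolding Kc_def e1 q_def D_def ..
  have "Kc l (m + 2) * (real m + 2*l + 3) = 2 * ((p + q) * Beta (p + 1) q) / D"
    unfolding Km2 e2 by (simp add: field_simps)
  also have "\<dots> = 2 * p * Beta p q / D" unfolding B by simp
  also have "\<dots> = Kc l m * (real m + 1)" unfolding Km e3 by simp
  finally show ?thesis .
qed

lemma choose_step_nat: "k < N \<Longrightarrow> (N choose k) * (N - k) = (N choose Suc k) * Suc k"
  using binomial_absorb_comp[of N k] binomial_absorption[of k N] by (simp add: mult.commute)

lemma choose_step2:
  assumes "N = k + r + 2"
  shows "real (N choose k) * (real r + 2) * (real r + 1) = real (N choose (k+2)) * (real k + 1) * (real k + 2)"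
proof -
  have a: "(N choose k) * (r + 2) = (N choose Suc k) * Suc k"
    using choose_step_nat[of k N] assms by simp
  have b: "(N choose Suc k) * (r + 1) = (N choose Suc (Suc k)) * Suc (Suc k)"
    using choose_step_nat[of "Suc k" N] assms by simp
  have "(N choose k) * (r + 2) * (r + 1) = (N choose (k+2)) * (k + 1) * (k + 2)"
    using a b by (metis (no_types, lifting) Suc_1 add_Suc_right add.commute mult.assoc mult.commute plus_1_eq_Suc)
  hence h: "real (N choose k) * real (r + 2) * real (r + 1) = real (N choose (k+2)) * real (k + 1) * real (k + 2)"
    by (metis of_nat_mult)
  have "real (r+2) = real r + 2" "real (r+1) = real r + 1" "real (k+2) = real k + 2" "real (k+1) = real k + 1"
    by simp_all
  thus ?thesis using h by metis
qed

lemma coef_step: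
  assumes l: "l > -1" and N: "N = 2*j + 2*r + 2"
  shows "real (N choose (2*j)) * Kc l (2*j) * Kc l (2*r+2) * ((2*real r+2) * (2*real r + 2 + 2*l + 1))
       = real (N choose (2*j+2)) * Kc l (2*j+2) * Kc l (2*r) * ((2*real j+2) * (2*real j + 2 + 2*l + 1))"
proof -
  have k1: "Kc l (2*r+2) * (2*real r + 2 + 2*l + 1) = Kc l (2*r) * (2*real r + 1)"
    using Kc_rec[OF l, of "2*r"] by (simp add: algebra_simps)
  have k2: "Kc l (2*j+2) * (2*real j + 2 + 2*l + 1) = Kc l (2*j) * (2*real j + 1)"
    using Kc_rec[OF l, of "2*j"] by (simp add: algebra_simps)
  have c: "real (N choose (2*j)) * (real (2*r) + 2) * (real (2*r) + 1) = real (N choose (2*j+2)) * (real (2*j) + 1) * (real (2*j) + 2)"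
    by (rule choose_step2) (use N in simp)
  have "real (N choose (2*j)) * Kc l (2*j) * Kc l (2*r+2) * ((2*real r+2) * (2*real r + 2 + 2*l + 1))
     = real (N choose (2*j)) * Kc l (2*j) * (2*real r+2) * (Kc l (2*r+2) * (2*real r + 2 + 2*l + 1))"
    by (simp add: mult_ac)
  also have "\<dots> = Kc l (2*j) * Kc l (2*r) * (real (N choose (2*j)) * (real (2*r) + 2) * (real (2*r) + 1))"
    unfolding k1 by (simp add: mult_ac)
  also have "\<dots> = Kc l (2*j) * Kc l (2*r) * (real (N choose (2*j+2)) * (real (2*j) + 1) * (real (2*j) + 2))"
    unfolding c ..
  also have "\<dots> = real (N choose (2*j+2)) * (Kc l (2*j+2) * (2*real j + 2 + 2*l + 1)) * Kc l (2*r) * (2*real j+2)"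
    unfolding k2 by (simp add: mult_ac)
  finally show ?thesis by (simp add: mult_ac)
qed

lemma telescope:
  fixes A B :: "nat \<Rightarrow> real"
  assumes "\<And>j. j < n \<Longrightarrow> A j = B (Suc j)" "A n = 0" "B 0 = 0"
  shows "(\<Sum>j\<le>n. A j - B j) = 0"
proof -
  have "(\<Sum>j\<le>n. A j) = (\<Sum>j<n. A j) + A n" by (simp add: lessThan_Suc_atMost[symmetric])
  also have "\<dots> = (\<Sum>j<n. B (Suc j))" using assms by simp
  finally have a: "(\<Sum>j\<le>n. A j) = (\<Sum>j<n. B (Suc j))" .
  have b: "(\<Sum>j\<le>n. B j) = (\<Sum>j<n. B (Suc j))"
    using assms(3) by (cases n) (simp_all del: sum.atMost_Suc add: sum.atMost_Suc_shift lessThan_Suc_atMost)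
  show ?thesis using a b by (simp add: sum_subtractf)
qed



lemma alg_n:
  fixes l x t :: real and n :: nat
  assumes l: "l > -1" and x: "x > 0" and t: "t > 0"
  defines "S \<equiv> {k. k \<le> 2*n \<and> even k}"
  defines "d \<equiv> (\<lambda>k. real ((2*n) choose k) * Kc l k * Kc l (2*n-k))"
  defines "al \<equiv> (\<lambda>k. l + real (2*n-k) + 1)"
  defines "be \<equiv> (\<lambda>k. l + real k + 1)"
  shows "(\<Sum>k\<in>S. d k * (al k * (al k - 1)) * x powr (al k - 2) * t powr be k)
            - (\<Sum>k\<in>S. d k * (be k * (be k - 1)) * x powr al k * t powr (be k - 2))
            - l * (l + 1) / x\<^sup>2 * (\<Sum>k\<in>S. d k * x powr al k * t powr be k)
            + l * (l + 1) / t\<^sup>2 * (\<Sum>k\<in>S. d k * x powr al k * t powr be k) = 0"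
proof -
  define A' where "A' = (\<lambda>k. d k * (al k * (al k - 1) - l * (l+1)) * x powr (al k - 2) * t powr be k)"
  define B' where "B' = (\<lambda>k. d k * (be k * (be k - 1) - l * (l+1)) * x powr al k * t powr (be k - 2))"
  have px: "x powr (a - 2) = x powr a / x\<^sup>2" for a
    using x by (simp add: powr_diff powr_numeral)
  have pt: "t powr (a - 2) = t powr a / t\<^sup>2" for a
    using t by (simp add: powr_diff powr_numeral)
  have Seq: "S = (\<lambda>j. 2*j) ` {..n}"
  proof
    show "S \<subseteq> (\<lambda>j. 2*j) ` {..n}"
    proof
      fix k assume "k \<in> S"
      then obtain j where "k = 2*j" "k \<le> 2*n" unfolding S_def by (auto elim: evenE)
      thus "k \<in> (\<lambda>j. 2*j) ` {..n}" by auto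
    qed
    show "(\<lambda>j. 2*j) ` {..n} \<subseteq> S" unfolding S_def by auto
  qed
  have "(\<Sum>k\<in>S. d k * (al k * (al k - 1)) * x powr (al k - 2) * t powr be k)
            - (\<Sum>k\<in>S. d k * (be k * (be k - 1)) * x powr al k * t powr (be k - 2))
            - l * (l + 1) / x\<^sup>2 * (\<Sum>k\<in>S. d k * x powr al k * t powr be k)
            + l * (l + 1) / t\<^sup>2 * (\<Sum>k\<in>S. d k * x powr al k * t powr be k)
        = (\<Sum>k\<in>S. d k * (al k * (al k - 1)) * x powr (al k - 2) * t powr be k
                  - d k * (be k * (be k - 1)) * x powr al k * t powr (be k - 2)
                  - l * (l + 1) / x\<^sup>2 * (d k * x powr al k * t powr be k)
                  + l * (l + 1) / t\<^sup>2 * (d k * x powr al k * t powr be k))"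
    by (simp add: sum_subtractf sum.distrib sum_distrib_left)
  also have "\<dots> = (\<Sum>k\<in>S. A' k - B' k)"
  proof (rule sum.cong[OF refl])
    fix k
    show "d k * (al k * (al k - 1)) * x powr (al k - 2) * t powr be k
                  - d k * (be k * (be k - 1)) * x powr al k * t powr (be k - 2)
                  - l * (l + 1) / x\<^sup>2 * (d k * x powr al k * t powr be k)
                  + l * (l + 1) / t\<^sup>2 * (d k * x powr al k * t powr be k) = A' k - B' k"
      unfolding A'_def B'_def px pt using x t by (simp add: field_simps)
  qed
  also have "(\<Sum>k\<in>S. A' k - B' k) = (\<Sum>j\<le>n. A' (2*j) - B' (2*j))"
    unfolding Seq by (subst sum.reindex) (auto simp: inj_on_def)
  also have "\<dots> = 0"
  proof (rule telescope)
    show "A' (2*n) = 0" unfolding A'_def al_def by (simp add: algebra_simps)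
    show "B' (2*0) = 0" unfolding B'_def be_def by (simp add: algebra_simps)
    fix j assume "j < n"
    then obtain r where n: "n = j + r + 1" by (metis add.commute add_Suc less_iff_Suc_add plus_1_eq_Suc)
    have n1: "2*n - 2*j = 2*r+2" "2*n - (2*j+2) = 2*r" using n by simp_all
    have q1: "al (2*j) * (al (2*j) - 1) - l*(l+1) = (2*real r+2)*(2*real r+2+2*l+1)"
      unfolding al_def n1 by (simp add: algebra_simps)
    have q2: "be (2*j+2) * (be (2*j+2) - 1) - l*(l+1) = (2*real j+2)*(2*real j+2+2*l+1)"
      unfolding be_def by (simp add: algebra_simps)
    have X: "al (2*j) - 2 = al (2*j+2)" unfolding al_def n1 by simp
    have T: "be (2*j) = be (2*j+2) - 2" unfolding be_def by simp
    have C: "d (2*j) * ((2*real r+2)*(2*real r+2+2*l+1)) = d (2*j+2) * ((2*real j+2)*(2*real j+2+2*l+1))"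
      unfolding d_def n1 using coef_step[OF l, of "2*n" j r] n by (simp add: mult_ac)
    have "A' (2*j) = d (2*j) * ((2*real r+2)*(2*real r+2+2*l+1)) * x powr al (2*j+2) * t powr (be (2*j+2) - 2)"
      unfolding A'_def q1 X T ..
    also have "\<dots> = B' (2*j+2)" unfolding B'_def q2 C ..
    finally have "A' (2*j) = B' (2*j+2)" .
    thus "A' (2*j) = B' (2 * Suc j)" by (metis mult_Suc_right add.commute add_2_eq_Suc)
  qed
  finally show ?thesis .
qed



lemma fin_S: "finite {k::nat. k \<le> 2*n \<and> even k}"
  by (rule finite_subset[of _ "{..2*n}"]) auto

lemma Un_closed:
  fixes l x t :: real and n :: nat
  assumes l: "l > -1" and x: "x > 0" and t: "t > 0"
  shows "YY l (wave_poly n) x t = (\<Sum>k\<in>{k. k \<le> 2*n \<and> even k}.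
      (real ((2*n) choose k) * Kc l k * Kc l (2*n-k)) * x powr (l + real (2*n-k) + 1) * t powr (l + real k + 1))"
proof -
  let ?S = "{k::nat. k \<le> 2*n \<and> even k}"
  have inner: "Yop l (\<lambda>\<tau>. wave_poly n s \<tau>) t =
      (\<Sum>k\<in>?S. (real ((2*n) choose k) * Kc l k * t powr (l + real k + 1)) * s^(2*n-k))" for s
  proof -
    have "Yop l (\<lambda>\<tau>. wave_poly n s \<tau>) t = (\<Sum>k\<in>?S. (real ((2*n) choose k) * s^(2*n-k)) * Kc l k * t powr (l + real k + 1))"
      unfolding wave_poly_def
      using Yop_sum[OF l t fin_S[of n], of "\<lambda>k. real ((2*n) choose k) * s^(2*n-k)" "\<lambda>k. k"] by simp
    also have "\<dots> = (\<Sum>k\<in>?S. (real ((2*n) choose k) * Kc l k * t powr (l + real k + 1)) * s^(2*n-k))"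
      by (simp add: mult_ac)
    finally show ?thesis .
  qed
  have "YY l (wave_poly n) x t = Yop l (\<lambda>s. \<Sum>k\<in>?S. (real ((2*n) choose k) * Kc l k * t powr (l + real k + 1)) * s^(2*n-k)) x"
    unfolding YY_def inner ..
  also have "\<dots> = (\<Sum>k\<in>?S. (real ((2*n) choose k) * Kc l k * t powr (l + real k + 1)) * Kc l (2*n-k) * x powr (l + real (2*n-k) + 1))"
    by (rule Yop_sum[OF l x fin_S[of n]])
  also have "\<dots> = (\<Sum>k\<in>?S. (real ((2*n) choose k) * Kc l k * Kc l (2*n-k)) * x powr (l + real (2*n-k) + 1) * t powr (l + real k + 1))"
    by (simp add: mult_ac)
  finally show ?thesis .
qed

lemma YY_x0: "YY l p 0 t = 0" unfolding YY_def Yop_def by simp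
lemma YY_t0: "YY l p x 0 = 0" unfolding YY_def Yop_def by simp

lemma lim0:
  fixes f :: "real \<Rightarrow> real" and S :: "nat set"
  assumes S: "finite S" and p: "\<And>k. k \<in> S \<Longrightarrow> p k > 0"
    and feq: "\<And>z. z > 0 \<Longrightarrow> f z = (\<Sum>k\<in>S. c k * z powr p k)"
  shows "(f \<longlongrightarrow> 0) (at_right 0)"
proof -
  have "((\<lambda>z. \<Sum>k\<in>S. c k * z powr p k) \<longlongrightarrow> (\<Sum>k\<in>S. c k * 0 powr p k)) (at_right 0)"
  proof (intro tendsto_sum tendsto_mult tendsto_const)
    fix k assume k: "k \<in> S"
    show "((\<lambda>z. z powr p k) \<longlongrightarrow> 0 powr p k) (at_right 0)"
      by (rule tendsto_powr') (use p[OF k] in \<open>auto intro!: tendsto_ident_at simp: eventually_at_filter\<close>)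
  qed
  hence "((\<lambda>z. \<Sum>k\<in>S. c k * z powr p k) \<longlongrightarrow> 0) (at_right 0)" by simp
  moreover have "eventually (\<lambda>z. (\<Sum>k\<in>S. c k * z powr p k) = f z) (at_right 0)"
    using feq by (auto simp: eventually_at_filter)
  ultimately show ?thesis by (rule Lim_transform_eventually)
qed

lemma Kc_Gamma: "Kc l m = Gamma ((real m + 1)/2) * Gamma (l+1) / (Gamma ((real m + 1)/2 + (l + 1)) * (2 * 2 powr (l + 1/2) * Gamma (l + 3/2)))"
  unfolding Kc_def Beta_def by (simp add: field_simps)

lemma main_n:
  fixes l :: real and n :: nat
  assumes l: "l > -1"
  shows "(\<forall>x>0. \<forall>t>0. solves_pde l (YY l (wave_poly n)) x t)
   \<and> (\<forall>t>0. YY l (wave_poly n) 0 t = 0 \<and> ((\<lambda>x. YY l (wave_poly n) x t) \<longlongrightarrow> 0) (at_right 0))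
   \<and> (\<forall>x>0. YY l (wave_poly n) x 0 = 0 \<and> ((\<lambda>t. YY l (wave_poly n) x t) \<longlongrightarrow> 0) (at_right 0))"
proof (intro conjI allI impI)
  let ?S = "{k::nat. k \<le> 2*n \<and> even k}"
  define d where "d = (\<lambda>k. real ((2*n) choose k) * Kc l k * Kc l (2*n-k))"
  define al where "al = (\<lambda>k. l + real (2*n-k) + 1)"
  define be where "be = (\<lambda>k. l + real k + 1)"
  have Ueq: "\<And>z w. z > 0 \<Longrightarrow> w > 0 \<Longrightarrow> YY l (wave_poly n) z w = (\<Sum>k\<in>?S. d k * z powr al k * w powr be k)"
    unfolding d_def al_def be_def by (rule Un_closed[OF l])
  fix x t :: real
  { assume x: "x > 0" and t: "t > 0"
    show "solves_pde l (YY l (wave_poly n)) x t"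
    proof (rule pde_generic[OF x t fin_S[of n] Ueq])
      show "(\<Sum>k\<in>?S. d k * (al k * (al k - 1)) * x powr (al k - 2) * t powr be k)
            - (\<Sum>k\<in>?S. d k * (be k * (be k - 1)) * x powr al k * t powr (be k - 2))
            - l * (l + 1) / x\<^sup>2 * YY l (wave_poly n) x t + l * (l + 1) / t\<^sup>2 * YY l (wave_poly n) x t = 0"
        unfolding Ueq[OF x t] unfolding d_def al_def be_def by (rule alg_n[OF l x t])
    qed simp_all }
  show "YY l (wave_poly n) 0 t = 0" by (rule YY_x0)
  show "YY l (wave_poly n) x 0 = 0" by (rule YY_t0)
  { assume t: "t > 0"
    show "((\<lambda>x. YY l (wave_poly n) x t) \<longlongrightarrow> 0) (at_right 0)"
      by (rule lim0[OF fin_S[of n], where p=al and c="\<lambda>k. d k * t powr be k"]) (use l t Ueq in \<open>auto simp: al_def mult_ac\<close>) }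
  { assume x: "x > 0"
    show "((\<lambda>t. YY l (wave_poly n) x t) \<longlongrightarrow> 0) (at_right 0)"
      by (rule lim0[OF fin_S[of n], where p=be and c="\<lambda>k. d k * x powr al k"]) (use l x Ueq in \<open>auto simp: be_def mult_ac\<close>) }
qed



lemma wave0: "wave_poly 0 = (\<lambda>x t. 1)"
proof -
  have "{k::nat. k \<le> 2*0 \<and> even k} = {0}" by auto
  thus ?thesis unfolding wave_poly_def by (simp add: fun_eq_iff)
qed

lemma C0_Kc: "C0 l = Kc l 0"
proof -
  have e: "l + 3/2 = (l + 1/2) + 1" by simp
  have p: "2 powr (l + 3/2) = 2 * 2 powr (l + 1/2)"
    unfolding e by (simp only: powr_add powr_one mult.commute)
  show ?thesis unfolding C0_def Kc_Gamma p by (simp add: power2_eq_square field_simps)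
qed

lemma coef_eq:
  fixes l :: real and n k :: nat
  assumes k: "k \<le> 2*n"
  shows "Kc l k * Kc l (2*n-k) =
    Gamma (real n + (1 - real k)/2) * Gamma ((real k + 1)/2) * (Gamma (l + 1))\<^sup>2
              / (2 powr (2*l + 3) * (Gamma (l + 3/2))\<^sup>2
                 * Gamma (real n + l + (3 - real k)/2) * Gamma (l + (real k + 3)/2))"
proof -
  have a1: "(real (2*n-k) + 1)/2 = real n + (1 - real k)/2" using k by (simp add: of_nat_diff field_simps)
  have a2: "(real (2*n-k) + 1)/2 + (l + 1) = real n + l + (3 - real k)/2" using k by (simp add: of_nat_diff field_simps)
  have a3: "(real k + 1)/2 + (l + 1) = l + (real k + 3)/2" by (simp add: field_simps)
  have p: "2 powr (2*l + 3) = (2 * 2 powr (l + 1/2)) * (2 * 2 powr (l + 1/2))"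
  proof -
    have e: "2*l + 3 = (l + 1/2) + (l + 1/2) + 2" by simp
    have f: "(2::real) powr 2 = 4" by (simp add: powr_numeral)
    have "2 powr (2*l + 3) = 2 powr (l + 1/2) * 2 powr (l + 1/2) * 2 powr 2"
      unfolding e by (simp only: powr_add)
    thus ?thesis unfolding f by simp
  qed
  show ?thesis unfolding Kc_Gamma a1 a2 a3 p by (simp add: power2_eq_square field_simps)
qed

theorem proposition4p1:
  fixes l :: real
  assumes "l \<ge> -1/2"
  defines "U0 \<equiv> YY l (\<lambda>x t. 1)"
  defines "U \<equiv> (\<lambda>n::nat. YY l (wave_poly n))"
  shows
    "(\<forall>x>0. \<forall>t>0. solves_pde l U0 x t)
   \<and> (\<forall>t>0. U0 0 t = 0 \<and> ((\<lambda>x. U0 x t) \<longlongrightarrow> 0) (at_right 0))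
   \<and> (\<forall>x>0. U0 x 0 = 0 \<and> ((\<lambda>t. U0 x t) \<longlongrightarrow> 0) (at_right 0))
   \<and> (\<forall>x>0. \<forall>t>0. U0 x t = (C0 l)\<^sup>2 * x powr (l + 1) * t powr (l + 1))
   \<and> (\<forall>n\<ge>1. \<forall>x>0. \<forall>t>0. solves_pde l (U n) x t)
   \<and> (\<forall>n\<ge>1. \<forall>t>0. U n 0 t = 0 \<and> ((\<lambda>x. U n x t) \<longlongrightarrow> 0) (at_right 0))
   \<and> (\<forall>n\<ge>1. \<forall>x>0. U n x 0 = 0 \<and> ((\<lambda>t. U n x t) \<longlongrightarrow> 0) (at_right 0))
   \<and> (\<forall>n\<ge>1. \<forall>x>0. \<forall>t>0. U n x t =
        (\<Sum>k\<in>{k. k \<le> 2*n \<and> even k}.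
           real ((2*n) choose k)
           * (Gamma (real n + (1 - real k)/2) * Gamma ((real k + 1)/2) * (Gamma (l + 1))\<^sup>2
              / (2 powr (2*l + 3) * (Gamma (l + 3/2))\<^sup>2
                 * Gamma (real n + l + (3 - real k)/2) * Gamma (l + (real k + 3)/2)))
           * x powr (real (2*n) - real k + l + 1) * t powr (real k + l + 1)))"
proof -
  have l: "l > -1" using assms(1) by simp
  have U0U: "U0 = U 0" unfolding U0_def U_def wave0 ..
  have M: "\<And>n. (\<forall>x>0. \<forall>t>0. solves_pde l (U n) x t)
   \<and> (\<forall>t>0. U n 0 t = 0 \<and> ((\<lambda>x. U n x t) \<longlongrightarrow> 0) (at_right 0))
   \<and> (\<forall>x>0. U n x 0 = 0 \<and> ((\<lambda>t. U n x t) \<longlongrightarrow> 0) (at_right 0))"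
    unfolding U_def by (rule main_n[OF l])
  have C0: "\<forall>x>0. \<forall>t>0. U0 x t = (C0 l)\<^sup>2 * x powr (l + 1) * t powr (l + 1)"
  proof (intro allI impI)
    fix x t :: real assume x: "x > 0" and t: "t > 0"
    have "{k::nat. k \<le> 2*0 \<and> even k} = {0}" by auto
    thus "U0 x t = (C0 l)\<^sup>2 * x powr (l + 1) * t powr (l + 1)"
      unfolding U0U U_def Un_closed[OF l x t] C0_Kc by (simp add: power2_eq_square)
  qed
  have CN: "\<forall>n\<ge>1. \<forall>x>0. \<forall>t>0. U n x t =
        (\<Sum>k\<in>{k. k \<le> 2*n \<and> even k}.
           real ((2*n) choose k)
           * (Gamma (real n + (1 - real k)/2) * Gamma ((real k + 1)/2) * (Gamma (l + 1))\<^sup>2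
              / (2 powr (2*l + 3) * (Gamma (l + 3/2))\<^sup>2
                 * Gamma (real n + l + (3 - real k)/2) * Gamma (l + (real k + 3)/2)))
           * x powr (real (2*n) - real k + l + 1) * t powr (real k + l + 1))"
  proof (intro allI impI)
    fix n :: nat and x t :: real assume x: "x > 0" and t: "t > 0"
    show "U n x t = (\<Sum>k\<in>{k. k \<le> 2*n \<and> even k}.
           real ((2*n) choose k)
           * (Gamma (real n + (1 - real k)/2) * Gamma ((real k + 1)/2) * (Gamma (l + 1))\<^sup>2
              / (2 powr (2*l + 3) * (Gamma (l + 3/2))\<^sup>2
                 * Gamma (real n + l + (3 - real k)/2) * Gamma (l + (real k + 3)/2)))
           * x powr (real (2*n) - real k + l + 1) * t powr (real k + l + 1))"
      unfolding U_def Un_closed[OF l x t]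
    proof (rule sum.cong[OF refl])
      fix k assume "k \<in> {k. k \<le> 2*n \<and> even k}"
      hence k: "k \<le> 2*n" by simp
      have e1: "l + real (2*n-k) + 1 = real (2*n) - real k + l + 1" using k by (simp add: of_nat_diff)
      have e2: "l + real k + 1 = real k + l + 1" by simp
      show "real ((2*n) choose k) * Kc l k * Kc l (2*n-k) * x powr (l + real (2*n-k) + 1) * t powr (l + real k + 1) =
         real ((2*n) choose k)
           * (Gamma (real n + (1 - real k)/2) * Gamma ((real k + 1)/2) * (Gamma (l + 1))\<^sup>2
              / (2 powr (2*l + 3) * (Gamma (l + 3/2))\<^sup>2
                 * Gamma (real n + l + (3 - real k)/2) * Gamma (l + (real k + 3)/2)))
           * x powr (real (2*n) - real k + l + 1) * t powr (real k + l + 1)"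
        unfolding e1 e2 coef_eq[OF k, symmetric] by (simp add: mult_ac)
    qed
  qed
  show ?thesis using M[of 0] M C0 CN unfolding U0U by blast
qed

end
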